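(* Let $G$ be of type $A_{n-1}$ and $1\le r,s\le n-1$. Then $X(w_{s,r})^{ss}_{\lambda_s}(\mathcal{L}(n\omega_r))=X(w_{s,r})^{s}_{\lambda_s}(\mathcal{L}(n\omega_r))$ if and only if $n\nmid rs$.
   Context: $G$ is the simple adjoint group of type $A_{n-1}$ with maximal torus $T$, Borel $B$, simple roots $\alpha_1,\dots,\alpha_{n-1}$, fundamental weights $\omega_i$; $\lambda_s$ the one-parameter subgroup with $\langle\alpha_j,\lambda_s\rangle=\delta_{sj}$. $P=P_{S\setminus\{\alpha_r\}}$, $W^{S\setminus\{\alpha_r\}}$ the minimal coset representatives with the Bruhat order, $X(w)=\overline{BwP/P}$, $\mathcal{L}(\chi)$ the line bundle of dominant $\chi$ on $G/P$. $w_{s,r}$ is the unique Bruhat-minimal $w\in W^{S\setminus\{\alpha_r\}}$ with $\langle w(\omega_r),\lambda_s\rangle\le0$ (the unique minimal Schubert variety with $\lambda_s$-semistable points). For $H=\lambda_s(\mathbb{G}_m)$: semistable points are those at which some $H$-invariant section of a positive power of the bundle is nonzero; stable points are semistable points with closed $H$-orbit in the semistable locus and finite stabilizer. *)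

theory Defs
  imports Complex_Main "HOL-Library.Multiset" "HOL-Combinatorics.Permutations"
begin

text \<open>Concrete model of the Grassmannian G/P (P maximal parabolic for alpha_r, G = PGL_n)
  inside the projective space of the r-th exterior power of C^n, via Pluecker coordinates
  indexed by r-subsets of {1..n}. Points of projective space are represented by nonzero
  coordinate vectors; all notions below are invariant under nonzero scaling.\<close>

definition rsubsets :: "nat \<Rightarrow> nat \<Rightarrow> nat set set" where
  "rsubsets n r = {I. I \<subseteq> {1..n} \<and> card I = r}"

definition plvec :: "nat \<Rightarrow> nat \<Rightarrow> (nat set \<Rightarrow> complex) set" where
  "plvec n r = {p. (\<forall>I. I \<notin> rsubsets n r \<longrightarrow> p I = 0) \<and> (\<exists>I. p I \<noteq> 0)}"

text \<open>Homogeneous polynomials in the Pluecker coordinates: finitely supported coefficient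
  functions on monomials (multisets of coordinate indices).\<close>

definition eval_form :: "(nat set multiset \<Rightarrow> complex) \<Rightarrow> (nat set \<Rightarrow> complex) \<Rightarrow> complex" where
  "eval_form c p = (\<Sum>M\<in>{M. c M \<noteq> 0}. c M * (\<Prod>I\<in>#M. p I))"

definition is_form :: "nat \<Rightarrow> nat \<Rightarrow> nat \<Rightarrow> ((nat set \<Rightarrow> complex) \<Rightarrow> complex) \<Rightarrow> bool" where
  "is_form n r d f \<longleftrightarrow> (\<exists>c. finite {M. c M \<noteq> 0} \<and>
      (\<forall>M. c M \<noteq> 0 \<longrightarrow> size M = d \<and> set_mset M \<subseteq> rsubsets n r) \<and> f = eval_form c)"

definition zclosed :: "nat \<Rightarrow> nat \<Rightarrow> (nat set \<Rightarrow> complex) set \<Rightarrow> bool" where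
  "zclosed n r S \<longleftrightarrow> (\<exists>F. (\<forall>f\<in>F. \<exists>d. is_form n r d f) \<and>
      S = {p \<in> plvec n r. \<forall>f\<in>F. f p = 0})"

definition zclosure :: "nat \<Rightarrow> nat \<Rightarrow> (nat set \<Rightarrow> complex) set \<Rightarrow> (nat set \<Rightarrow> complex) set" where
  "zclosure n r S = \<Inter>{Z. zclosed n r Z \<and> S \<subseteq> Z}"

text \<open>Pluecker coordinates of the span of the r columns (indexed 0..<r) of a matrix A
  (rows indexed by 1..n).\<close>

definition minor :: "(nat \<Rightarrow> nat \<Rightarrow> complex) \<Rightarrow> nat \<Rightarrow> nat set \<Rightarrow> complex" where
  "minor A r I = (\<Sum>\<sigma> | \<sigma> permutes {0..<r}.
      of_int (sign \<sigma>) * (\<Prod>k<r. A (sorted_list_of_set I ! (\<sigma> k)) k))"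

definition plucker :: "nat \<Rightarrow> nat \<Rightarrow> (nat \<Rightarrow> nat \<Rightarrow> complex) \<Rightarrow> (nat set \<Rightarrow> complex)" where
  "plucker n r A = (\<lambda>I. if I \<in> rsubsets n r then minor A r I else 0)"

text \<open>Borel subgroup: invertible upper triangular n x n matrices (its image in PGL_n has the
  same orbits).\<close>

definition borel :: "nat \<Rightarrow> (nat \<Rightarrow> nat \<Rightarrow> complex) set" where
  "borel n = {b. (\<forall>i j. j < i \<longrightarrow> b i j = 0) \<and> (\<forall>i\<in>{1..n}. b i i \<noteq> 0)}"

text \<open>A minimal coset representative w in W^{S - alpha_r} is encoded by the r-subset
  J = w({1..r}); the T-fixed point wP corresponds to the coordinate subspace spanned by
  e_j, j in J.\<close>

definition schubert_cell :: "nat \<Rightarrow> nat \<Rightarrow> nat set \<Rightarrow> (nat set \<Rightarrow> complex) set" where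
  "schubert_cell n r J = {plucker n r (\<lambda>i k. b i (sorted_list_of_set J ! k)) | b. b \<in> borel n}"

definition schubert :: "nat \<Rightarrow> nat \<Rightarrow> nat set \<Rightarrow> (nat set \<Rightarrow> complex) set" where
  "schubert n r J = zclosure n r (schubert_cell n r J)"

text \<open>Bruhat order on W^{S - alpha_r}, transported to r-subsets (Gale order).\<close>

definition bruhat_le :: "nat \<Rightarrow> nat set \<Rightarrow> nat set \<Rightarrow> bool" where
  "bruhat_le r J J' \<longleftrightarrow> (\<forall>k<r. sorted_list_of_set J ! k \<le> sorted_list_of_set J' ! k)"

text \<open>The pairing of w(omega_r) with lambda_s, where J = w({1..r}):
  w(omega_r) = sum_{i in J} eps_i - (r/n) sum_i eps_i, and lambda_s(t) = [diag(t,..,t,1,..,1)]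
  (s entries t).\<close>

definition pairing :: "nat \<Rightarrow> nat \<Rightarrow> nat \<Rightarrow> nat set \<Rightarrow> real" where
  "pairing n r s J = real (card (J \<inter> {1..s})) - real r * real s / real n"

text \<open>Action of the lift diag(t,..,t,1,..,1) of lambda_s(t) on Pluecker coordinates.\<close>

definition torus_act :: "nat \<Rightarrow> complex \<Rightarrow> (nat set \<Rightarrow> complex) \<Rightarrow> (nat set \<Rightarrow> complex)" where
  "torus_act s t p = (\<lambda>I. t ^ card (I \<inter> {1..s}) * p I)"

text \<open>Sections of L(n omega_r)^k on X are (restrictions of) forms of degree n*k in the
  Pluecker coordinates. With the canonical G_adj-linearization of L(n omega_r) = O(n),
  such a section f is lambda_s-invariant iff f(diag(t..,1..) x) = det^(k r) f(x) = t^(k r s) f(x).\<close>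

definition invariant_on :: "nat \<Rightarrow> nat \<Rightarrow> (nat set \<Rightarrow> complex) set \<Rightarrow> nat \<Rightarrow>
    ((nat set \<Rightarrow> complex) \<Rightarrow> complex) \<Rightarrow> bool" where
  "invariant_on r s X k f \<longleftrightarrow>
     (\<forall>t x. t \<noteq> 0 \<and> x \<in> X \<longrightarrow> f (torus_act s t x) = t ^ (k * r * s) * f x)"

definition semistable :: "nat \<Rightarrow> nat \<Rightarrow> nat \<Rightarrow> (nat set \<Rightarrow> complex) set \<Rightarrow> (nat set \<Rightarrow> complex) set" where
  "semistable n r s X = {x \<in> X. \<exists>k\<ge>1. \<exists>f. is_form n r (n * k) f \<and> invariant_on r s X k f \<and> f x \<noteq> 0}"

definition torus_orbit :: "nat \<Rightarrow> (nat set \<Rightarrow> complex) \<Rightarrow> (nat set \<Rightarrow> complex) set" where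
  "torus_orbit s x = {(\<lambda>I. c * torus_act s t x I) | c t. c \<noteq> 0 \<and> t \<noteq> 0}"

definition stable :: "nat \<Rightarrow> nat \<Rightarrow> nat \<Rightarrow> (nat set \<Rightarrow> complex) set \<Rightarrow> (nat set \<Rightarrow> complex) set" where
  "stable n r s X = {x \<in> semistable n r s X.
      (\<exists>Z. zclosed n r Z \<and> torus_orbit s x = Z \<inter> semistable n r s X) \<and>
      finite {t. t \<noteq> 0 \<and> (\<exists>c. torus_act s t x = (\<lambda>I. c * x I))}}"

end

theory Submission
  imports Defs
begin

definition wt :: "nat \<Rightarrow> nat set \<Rightarrow> nat" where "wt s I = card (I \<inter> {1..s})"

lemma torus_wt: "torus_act s t p = (\<lambda>I. t ^ wt s I * p I)"
  by (simp add: torus_act_def wt_def)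

lemma eval_form_superset:
  assumes "finite A" "{M. c M \<noteq> 0} \<subseteq> A"
  shows "eval_form c p = (\<Sum>M\<in>A. c M * (\<Prod>I\<in>#M. p I))"
  unfolding eval_form_def by (rule sum.mono_neutral_left) (use assms in auto)

lemma prod_mset_scale:
  "(\<Prod>I\<in>#M. c * t ^ wt s I * x I) = c ^ size M * t ^ (\<Sum>I\<in>#M. wt s I) * (\<Prod>I\<in>#M. x I)"
  by (induction M) (auto simp: power_add algebra_simps)

lemma prod_mset_scale1:
  "(\<Prod>I\<in>#M. c * x I) = c ^ size M * (\<Prod>I\<in>#M. x I)"
  by (induction M) (auto simp: algebra_simps)

lemma prod_mset_torus:
  "(\<Prod>I\<in>#M. t ^ wt s I * x I) = t ^ (\<Sum>I\<in>#M. wt s I) * (\<Prod>I\<in>#M. x I)"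
  by (induction M) (auto simp: power_add algebra_simps)

lemma form_scale:
  assumes "is_form n r d f"
  shows "f (\<lambda>I. c * p I) = c ^ d * f p"
proof -
  obtain cf where cf: "finite {M. cf M \<noteq> 0}" "\<forall>M. cf M \<noteq> 0 \<longrightarrow> size M = d \<and> set_mset M \<subseteq> rsubsets n r"
    "f = eval_form cf" using assms unfolding is_form_def by blast
  have "f (\<lambda>I. c * p I) = (\<Sum>M\<in>{M. cf M \<noteq> 0}. cf M * (c ^ d * (\<Prod>I\<in>#M. p I)))"
    unfolding cf(3) eval_form_def
    by (rule sum.cong) (use cf(2) in \<open>auto simp: prod_mset_scale1\<close>)
  also have "\<dots> = c ^ d * f p"
    unfolding cf(3) eval_form_def by (simp add: sum_distrib_left algebra_simps)
  finally show ?thesis .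
qed

lemma form_torus:
  assumes "is_form n r d f" "t \<noteq> 0"
  shows "is_form n r d (\<lambda>p. f (torus_act s t p))"
proof -
  obtain cf where cf: "finite {M. cf M \<noteq> 0}" "\<forall>M. cf M \<noteq> 0 \<longrightarrow> size M = d \<and> set_mset M \<subseteq> rsubsets n r"
    "f = eval_form cf" using assms unfolding is_form_def by blast
  define cf' where "cf' M = cf M * t ^ (\<Sum>I\<in>#M. wt s I)" for M
  have sup: "{M. cf' M \<noteq> 0} = {M. cf M \<noteq> 0}" using assms(2) by (auto simp: cf'_def)
  have eq: "f (torus_act s t p) = eval_form cf' p" for p
  proof -
    have "f (torus_act s t p) = (\<Sum>M\<in>{M. cf M \<noteq> 0}. cf M * (\<Prod>I\<in>#M. t ^ wt s I * p I))"
      by (simp add: cf(3) eval_form_def torus_wt)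
    also have "\<dots> = (\<Sum>M\<in>{M. cf M \<noteq> 0}. cf' M * (\<Prod>I\<in>#M. p I))"
      by (simp add: prod_mset_torus cf'_def mult.assoc)
    also have "\<dots> = eval_form cf' p" by (simp add: eval_form_def sup)
    finally show ?thesis .
  qed
  have h1: "\<forall>M. cf' M \<noteq> 0 \<longrightarrow> size M = d \<and> set_mset M \<subseteq> rsubsets n r"
    using cf(2) sup by blast
  have h2: "(\<lambda>p. f (torus_act s t p)) = eval_form cf'" using eq by blast
  show ?thesis unfolding is_form_def
    by (rule exI[of _ cf']) (use h1 h2 cf(1) sup in simp)
qed

lemma plvec_scale: "p \<in> plvec n r \<Longrightarrow> c \<noteq> 0 \<Longrightarrow> (\<lambda>I. c * p I) \<in> plvec n r"
  unfolding plvec_def by auto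

lemma plvec_torus: "t \<noteq> 0 \<Longrightarrow> torus_act s t p \<in> plvec n r \<longleftrightarrow> p \<in> plvec n r"
  unfolding plvec_def torus_act_def by auto

lemma zclosed_scale:
  assumes "zclosed n r Z" "y \<in> Z" "c \<noteq> 0"
  shows "(\<lambda>I. c * y I) \<in> Z"
proof -
  obtain F where F: "\<forall>f\<in>F. \<exists>d. is_form n r d f" "Z = {p \<in> plvec n r. \<forall>f\<in>F. f p = 0}"
    using assms(1) unfolding zclosed_def by blast
  show ?thesis using assms(2,3) F form_scale plvec_scale by fastforce
qed

lemma zclosed_torus_pre:
  assumes "zclosed n r Z" "t \<noteq> 0"
  shows "zclosed n r {p \<in> plvec n r. torus_act s t p \<in> Z}"
proof -
  obtain F where F: "\<forall>f\<in>F. \<exists>d. is_form n r d f" "Z = {p \<in> plvec n r. \<forall>f\<in>F. f p = 0}"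
    using assms(1) unfolding zclosed_def by blast
  let ?F = "(\<lambda>f p. f (torus_act s t p)) ` F"
  have "\<forall>f\<in>?F. \<exists>d. is_form n r d f" using F(1) form_torus assms(2) by blast
  moreover have "{p \<in> plvec n r. torus_act s t p \<in> Z} = {p \<in> plvec n r. \<forall>f\<in>?F. f p = 0}"
    using F(2) plvec_torus[OF assms(2)] by auto
  ultimately show ?thesis unfolding zclosed_def by blast
qed

abbreviation sl :: "nat set \<Rightarrow> nat list" where "sl I \<equiv> sorted_list_of_set I"

lemma rsub_fin: "I \<in> rsubsets n r \<Longrightarrow> finite I"
  unfolding rsubsets_def by (auto intro: finite_subset)

lemma rsub_props:
  assumes "I \<in> rsubsets n r"
  shows "set (sl I) = I" "length (sl I) = r" "sorted_wrt (<) (sl I)" "distinct (sl I)"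
    "I \<subseteq> {1..n}" "card I = r"
  using assms rsub_fin[OF assms] unfolding rsubsets_def
  by (auto simp: sorted_list_of_set.length_sorted_key_list_of_set)

lemma finite_rsubsets: "finite (rsubsets n r)"
  unfolding rsubsets_def by (rule finite_subset[of _ "Pow {1..n}"]) auto

lemma minor_triangular:
  assumes b: "\<forall>i j. j < i \<longrightarrow> b i j = 0" and J: "J \<in> rsubsets n r"
  shows "minor (\<lambda>i k. b i (sl J ! k)) r J = (\<Prod>k<r. b (sl J ! k) (sl J ! k))"
proof -
  let ?L = "sl J"
  let ?g = "\<lambda>\<sigma>. of_int (sign \<sigma>) * (\<Prod>k<r. b (?L ! (\<sigma> k)) (?L ! k))"
  have z: "?g \<sigma> = 0" if "\<sigma> permutes {0..<r}" "\<sigma> \<noteq> id" for \<sigma>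
  proof -
    have "\<not> (\<forall>i\<in>{0..<r}. \<sigma> i \<le> i)" using permutes_natset_le[OF that(1)] that(2) by blast
    then obtain k where k: "k < r" "\<sigma> k > k" by force
    have "\<sigma> k < r" using permutes_in_image[OF that(1)] k(1) by auto
    then have "?L ! k < ?L ! (\<sigma> k)"
      using sorted_wrt_nth_less[OF rsub_props(3)[OF J] k(2)] rsub_props(2)[OF J] by auto
    then have "b (?L ! (\<sigma> k)) (?L ! k) = 0" using b by blast
    then have "(\<Prod>k<r. b (?L ! (\<sigma> k)) (?L ! k)) = 0" using k(1)
      by (intro prod_zero) auto
    then show ?thesis by simp
  qed
  have "minor (\<lambda>i k. b i (sl J ! k)) r J = sum ?g {\<sigma>. \<sigma> permutes {0..<r}}"
    unfolding minor_def by simp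
  also have "\<dots> = ?g id + sum ?g ({\<sigma>. \<sigma> permutes {0..<r}} - {id})"
    by (rule sum.remove) (auto simp: finite_permutations permutes_id)
  also have "sum ?g ({\<sigma>. \<sigma> permutes {0..<r}} - {id}) = 0"
    by (rule sum.neutral) (use z in auto)
  finally show ?thesis by (simp add: sign_id)
qed

lemma minor_row_scale:
  assumes I: "I \<in> rsubsets n r"
  shows "minor (\<lambda>i k. d i * A i k) r I = (\<Prod>i\<in>I. d i) * minor A r I"
proof -
  let ?L = "sl I"
  have pI: "(\<Prod>k<r. d (?L ! k)) = (\<Prod>i\<in>I. d i)"
  proof -
    have "bij_betw ((!) ?L) {..<r} I"
      by (rule bij_betw_nth) (use rsub_props[OF I] in auto)
    then show ?thesis by (rule prod.reindex_bij_betw)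
  qed
  have "(\<Prod>k<r. d (?L ! (\<sigma> k)) * A (?L ! (\<sigma> k)) k) = (\<Prod>i\<in>I. d i) * (\<Prod>k<r. A (?L ! (\<sigma> k)) k)"
    if "\<sigma> permutes {0..<r}" for \<sigma>
  proof -
    have p: "\<sigma> permutes {..<r}" using that by (simp add: atLeast0LessThan)
    have "(\<Prod>k<r. d (?L ! (\<sigma> k))) = (\<Prod>k<r. d (?L ! k))"
      using prod.permute[OF p, of "\<lambda>k. d (?L ! k)"] by (simp add: comp_def)
    then show ?thesis using pI by (simp add: prod.distrib)
  qed
  then show ?thesis unfolding minor_def sum_distrib_left
    by (intro sum.cong) (auto simp: algebra_simps)
qed

lemma prod_if_le: 
  assumes "I \<in> rsubsets n r"
  shows "(\<Prod>i\<in>I. (if i \<le> s then t else 1)) = t ^ wt s I"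
proof -
  have f: "finite I" using rsub_fin[OF assms] .
  have "(\<Prod>i\<in>I. (if i \<le> s then t else 1)) = (\<Prod>i\<in>I \<inter> {i. i \<le> s}. t)"
    using prod.If_cases[OF f, of "\<lambda>i. i \<le> s" "\<lambda>_. t" "\<lambda>_. 1"] by simp
  also have "I \<inter> {i. i \<le> s} = I \<inter> {1..s}" using rsub_props(5)[OF assms] by auto
  finally show ?thesis by (simp add: wt_def)
qed

lemma cell_torus:
  assumes J: "J \<in> rsubsets n r" and p: "p \<in> schubert_cell n r J" and t: "t \<noteq> 0"
  shows "torus_act s t p \<in> schubert_cell n r J"
proof -
  obtain b where b: "b \<in> borel n" "p = plucker n r (\<lambda>i k. b i (sl J ! k))"
    using p unfolding schubert_cell_def by blast
  define d where "d i = (if i \<le> s then t else 1)" for i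
  define b' where "b' i j = d i * b i j" for i j
  have bb: "b' \<in> borel n" using b(1) t unfolding borel_def b'_def d_def by auto
  have pe: "plucker n r (\<lambda>i k. b' i (sl J ! k)) = torus_act s t p"
  proof
    fix I
    show "plucker n r (\<lambda>i k. b' i (sl J ! k)) I = torus_act s t p I"
    proof (cases "I \<in> rsubsets n r")
      case True
      have "minor (\<lambda>i k. b' i (sl J ! k)) r I = (\<Prod>i\<in>I. d i) * minor (\<lambda>i k. b i (sl J ! k)) r I"
        unfolding b'_def by (rule minor_row_scale[OF True])
      also have "(\<Prod>i\<in>I. d i) = t ^ wt s I" unfolding d_def by (rule prod_if_le[OF True])
      finally show ?thesis using True by (simp add: plucker_def b(2) torus_wt)
    qed (simp add: plucker_def b(2) torus_wt)
  qed
  show ?thesis unfolding schubert_cell_def mem_Collect_eq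
    by (rule exI[of _ b']) (use bb pe in auto)
qed

lemma cell_plvec:
  assumes J: "J \<in> rsubsets n r"
  shows "schubert_cell n r J \<subseteq> plvec n r"
proof
  fix p assume "p \<in> schubert_cell n r J"
  then obtain b where b: "b \<in> borel n" "p = plucker n r (\<lambda>i k. b i (sl J ! k))"
    unfolding schubert_cell_def by blast
  have "p J = (\<Prod>k<r. b (sl J ! k) (sl J ! k))"
    using b J minor_triangular[of b J n r] unfolding borel_def plucker_def by auto
  moreover have "(\<Prod>k<r. b (sl J ! k) (sl J ! k)) \<noteq> 0"
  proof -
    have "sl J ! k \<in> {1..n}" if "k < r" for k
      using nth_mem[of k "sl J"] rsub_props[OF J] that by auto
    then show ?thesis using b(1) unfolding borel_def by auto
  qed
  ultimately show "p \<in> plvec n r" unfolding plvec_def using b(2) J by (auto simp: plucker_def intro!: exI[of _ J])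
qed

lemma zclosed_plvec: "zclosed n r (plvec n r)"
  unfolding zclosed_def by (rule exI[of _ "{}"]) auto

lemma cell_sub_X: "schubert_cell n r J \<subseteq> schubert n r J"
  unfolding schubert_def zclosure_def by blast

lemma X_plvec: "J \<in> rsubsets n r \<Longrightarrow> schubert n r J \<subseteq> plvec n r"
  unfolding schubert_def zclosure_def using zclosed_plvec cell_plvec by blast

lemma X_scale: "y \<in> schubert n r J \<Longrightarrow> c \<noteq> 0 \<Longrightarrow> (\<lambda>I. c * y I) \<in> schubert n r J"
  unfolding schubert_def zclosure_def using zclosed_scale by blast

lemma X_torus:
  assumes J: "J \<in> rsubsets n r" and y: "y \<in> schubert n r J" and t: "t \<noteq> 0"
  shows "torus_act s t y \<in> schubert n r J"
  unfolding schubert_def zclosure_def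
proof (intro InterI, clarify)
  fix Z assume Z: "zclosed n r Z" "schubert_cell n r J \<subseteq> Z"
  let ?Z' = "{p \<in> plvec n r. torus_act s t p \<in> Z}"
  have "zclosed n r ?Z'" by (rule zclosed_torus_pre[OF Z(1) t])
  moreover have "schubert_cell n r J \<subseteq> ?Z'"
    using cell_plvec[OF J] cell_torus[OF J _ t] Z(2) by blast
  ultimately have "y \<in> ?Z'" using y unfolding schubert_def zclosure_def by blast
  then show "torus_act s t y \<in> Z" by blast
qed

lemma const_zero:
  fixes a :: "'m \<Rightarrow> complex"
  assumes T: "finite T" and e: "\<forall>M\<in>T. e M \<ge> 1"
    and h: "\<forall>u. u \<noteq> 0 \<longrightarrow> (\<Sum>M\<in>T. a M * u ^ e M) = C"
  shows "C = 0"
proof -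
  let ?h = "\<lambda>u::complex. \<Sum>M\<in>T. a M * u ^ e M"
  have "isCont ?h 0" by (intro continuous_intros)
  then have 1: "(?h \<longlongrightarrow> ?h 0) (at 0)" by (simp add: isCont_def)
  have 0: "?h 0 = 0" using e by (intro sum.neutral) (auto simp: power_0_left)
  have "eventually (\<lambda>u. ?h u = C) (at 0)"
    using h by (auto simp: eventually_at_filter)
  then have 2: "(?h \<longlongrightarrow> C) (at 0)" by (rule tendsto_eventually)
  from tendsto_unique[OF _ 1 2] 0 show ?thesis by simp
qed

lemma prod_mset_nz:
  assumes "(\<Prod>I\<in>#M. x I) \<noteq> (0::complex)" "I \<in># M"
  shows "x I \<noteq> 0"
  using assms by (induction M) auto

lemma ss_data:
  assumes x: "x \<in> semistable n r s X"
  obtains k f cf where "k \<ge> 1" "x \<in> X" "f x \<noteq> 0" "finite {M. cf M \<noteq> 0}"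
    "\<forall>M. cf M \<noteq> 0 \<longrightarrow> size M = n * k \<and> set_mset M \<subseteq> rsubsets n r" "f = eval_form cf"
    "\<forall>t y. t \<noteq> 0 \<and> y \<in> X \<longrightarrow> f (torus_act s t y) = t ^ (k * r * s) * f y"
    "is_form n r (n * k) f"
  using x unfolding semistable_def invariant_on_def is_form_def by blast

lemma ss_sides:
  assumes x: "x \<in> semistable n r s X" and nd: "\<not> n dvd r * s" and n1: "n \<ge> 1"
  shows "\<exists>I. I \<in> rsubsets n r \<and> x I \<noteq> 0 \<and> n * wt s I < r * s"
    and "\<exists>I. I \<in> rsubsets n r \<and> x I \<noteq> 0 \<and> n * wt s I > r * s"
proof -
  obtain k f cf where k: "k \<ge> 1" and xX: "x \<in> X" and fx: "f x \<noteq> 0" and fin: "finite {M. cf M \<noteq> 0}"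
    and cfs: "\<forall>M. cf M \<noteq> 0 \<longrightarrow> size M = n * k \<and> set_mset M \<subseteq> rsubsets n r"
    and fdef: "f = eval_form cf"
    and inv: "\<forall>t y. t \<noteq> 0 \<and> y \<in> X \<longrightarrow> f (torus_act s t y) = t ^ (k * r * s) * f y"
    using ss_data[OF x] by metis
  define P where "P M = (\<Prod>I\<in>#M. x I)" for M
  define W where "W M = (\<Sum>I\<in>#M. wt s I)" for M
  define T where "T = {M. cf M \<noteq> 0} \<inter> {M. P M \<noteq> 0}"
  have Tfin: "finite T" using fin unfolding T_def by auto
  have Tel: "I \<in> rsubsets n r \<and> x I \<noteq> 0" if "M \<in> T" "I \<in># M" for M I
    using that cfs prod_mset_nz[of x M I] unfolding T_def P_def by auto
  have Tsize: "size M = n * k" if "M \<in> T" for M using that cfs unfolding T_def by auto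
  have key: "(\<Sum>M\<in>T. cf M * P M * t ^ W M) = t ^ (k * r * s) * (\<Sum>M\<in>T. cf M * P M)"
    if t: "t \<noteq> 0" for t
  proof -
    have "f (torus_act s t x) = (\<Sum>M\<in>{M. cf M \<noteq> 0}. cf M * (\<Prod>I\<in>#M. t ^ wt s I * x I))"
      by (simp add: fdef eval_form_def torus_wt)
    also have "\<dots> = (\<Sum>M\<in>{M. cf M \<noteq> 0}. cf M * P M * t ^ W M)"
      by (simp only: prod_mset_torus P_def W_def) (simp add: algebra_simps)
    also have "\<dots> = (\<Sum>M\<in>T. cf M * P M * t ^ W M)"
      by (rule sum.mono_neutral_right) (use fin in \<open>auto simp: T_def\<close>)
    finally have 1: "f (torus_act s t x) = (\<Sum>M\<in>T. cf M * P M * t ^ W M)" .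
    have "f x = (\<Sum>M\<in>{M. cf M \<noteq> 0}. cf M * P M)" by (simp add: fdef eval_form_def P_def)
    also have "\<dots> = (\<Sum>M\<in>T. cf M * P M)"
      by (rule sum.mono_neutral_right) (use fin in \<open>auto simp: T_def\<close>)
    finally have 2: "f x = (\<Sum>M\<in>T. cf M * P M)" .
    show ?thesis using inv t xX 1 2 by metis
  qed
  have fxT: "f x = (\<Sum>M\<in>T. cf M * P M)"
  proof -
    have "f x = (\<Sum>M\<in>{M. cf M \<noteq> 0}. cf M * P M)" by (simp add: fdef eval_form_def P_def)
    also have "\<dots> = (\<Sum>M\<in>T. cf M * P M)"
      by (rule sum.mono_neutral_right) (use fin in \<open>auto simp: T_def\<close>)
    finally show ?thesis .
  qed
  have nW: "n * W M = (\<Sum>I\<in>#M. n * wt s I)" for M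
    unfolding W_def by (simp add: sum_mset_distrib_left)
  have neq: "n * wt s I \<noteq> r * s" for I using nd by (metis dvd_triv_left)
  show "\<exists>I. I \<in> rsubsets n r \<and> x I \<noteq> 0 \<and> n * wt s I < r * s"
  proof (rule ccontr)
    assume "\<not> ?thesis"
    then have big: "n * wt s I \<ge> r * s + 1" if "I \<in> rsubsets n r" "x I \<noteq> 0" for I
      using that neq[of I] by force
    have WM: "W M \<ge> k * r * s + 1" if M: "M \<in> T" for M
    proof -
      have "(\<Sum>I\<in>#M. r * s + 1) \<le> (\<Sum>I\<in>#M. n * wt s I)"
        by (rule sum_mset_mono) (use big Tel[OF M] in auto)
      then have "n * k * (r * s + 1) \<le> n * W M" using Tsize[OF M] nW[of M] by simp
      then have "n * (k * r * s + k) \<le> n * W M" by (simp add: algebra_simps)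
      then have "k * r * s + k \<le> W M" using n1 by simp
      then show ?thesis using k by simp
    qed
    have "f x = 0"
    proof (rule const_zero[OF Tfin, of "\<lambda>M. W M - k * r * s" "\<lambda>M. cf M * P M"])
      show "\<forall>M\<in>T. 1 \<le> W M - k * r * s" using WM by force
      show "\<forall>u. u \<noteq> 0 \<longrightarrow> (\<Sum>M\<in>T. cf M * P M * u ^ (W M - k * r * s)) = f x"
      proof (intro allI impI)
        fix u :: complex assume u: "u \<noteq> 0"
        have "u ^ (k * r * s) * (\<Sum>M\<in>T. cf M * P M * u ^ (W M - k * r * s))
            = (\<Sum>M\<in>T. cf M * P M * u ^ W M)"
          unfolding sum_distrib_left
        proof (rule sum.cong)
          fix M assume "M \<in> T"
          then have "W M = k * r * s + (W M - k * r * s)" using WM[of M] by simp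
          then have "u ^ W M = u ^ (k * r * s) * u ^ (W M - k * r * s)" by (metis power_add)
          then show "u ^ (k * r * s) * (cf M * P M * u ^ (W M - k * r * s)) = cf M * P M * u ^ W M"
            by simp
        qed simp
        also have "\<dots> = u ^ (k * r * s) * f x" using key[OF u] fxT by simp
        finally show "(\<Sum>M\<in>T. cf M * P M * u ^ (W M - k * r * s)) = f x" using u by simp
      qed
    qed
    then show False using fx by simp
  qed
  show "\<exists>I. I \<in> rsubsets n r \<and> x I \<noteq> 0 \<and> n * wt s I > r * s"
  proof (rule ccontr)
    assume "\<not> ?thesis"
    then have small: "n * wt s I + 1 \<le> r * s" if "I \<in> rsubsets n r" "x I \<noteq> 0" for I
      using that neq[of I] by force
    have WM: "W M + 1 \<le> k * r * s" if M: "M \<in> T" for M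
    proof -
      have "(\<Sum>I\<in>#M. n * wt s I + 1) \<le> (\<Sum>I\<in>#M. r * s)"
        by (rule sum_mset_mono) (use small Tel[OF M] in auto)
      moreover have "(\<Sum>I\<in>#M. n * wt s I + 1) = (\<Sum>I\<in>#M. n * wt s I) + size M"
        by (induction M) auto
      ultimately have "n * W M + n * k \<le> n * k * (r * s)" using Tsize[OF M] nW[of M]
        by simp
      then have "n * (W M + k) \<le> n * (k * r * s)" by (simp add: algebra_simps)
      then have "W M + k \<le> k * r * s" using n1 by simp
      then show ?thesis using k by simp
    qed
    have "f x = 0"
    proof (rule const_zero[OF Tfin, of "\<lambda>M. k * r * s - W M" "\<lambda>M. cf M * P M"])
      show "\<forall>M\<in>T. 1 \<le> k * r * s - W M" using WM by force
      show "\<forall>u. u \<noteq> 0 \<longrightarrow> (\<Sum>M\<in>T. cf M * P M * u ^ (k * r * s - W M)) = f x"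
      proof (intro allI impI)
        fix u :: complex assume u: "u \<noteq> 0"
        define t where "t = inverse u"
        have t: "t \<noteq> 0" "u * t = 1" using u by (auto simp: t_def)
        have "(\<Sum>M\<in>T. cf M * P M * u ^ (k * r * s - W M))
            = u ^ (k * r * s) * (\<Sum>M\<in>T. cf M * P M * t ^ W M)"
          unfolding sum_distrib_left
        proof (rule sum.cong)
          fix M assume "M \<in> T"
          then have "k * r * s = W M + (k * r * s - W M)" using WM[of M] by simp
          then have "u ^ (k * r * s) = u ^ W M * u ^ (k * r * s - W M)"
            using power_add[of u "W M" "k * r * s - W M"] by simp
          moreover have "u ^ W M * t ^ W M = 1" using t(2) by (metis power_mult_distrib power_one)
          ultimately have "u ^ (k * r * s) * t ^ W M = u ^ (k * r * s - W M)"
            by (metis mult.commute mult.left_commute mult_1_right)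
          then show "cf M * P M * u ^ (k * r * s - W M) = u ^ (k * r * s) * (cf M * P M * t ^ W M)"
            using t(2) by simp
        qed simp
        also have "\<dots> = (u * t) ^ (k * r * s) * f x" using key[OF t(1)] fxT
          by (simp add: power_mult_distrib)
        finally show "(\<Sum>M\<in>T. cf M * P M * u ^ (k * r * s - W M)) = f x" using t(2) by simp
      qed
    qed
    then show False using fx by simp
  qed
qed

lemma stab_finite:
  assumes "x I3 \<noteq> 0" "x I4 \<noteq> 0" "wt s I3 < wt s I4"
  shows "finite {t. t \<noteq> 0 \<and> (\<exists>c. torus_act s t x = (\<lambda>I. c * x I))}"
proof (rule finite_subset)
  let ?d = "wt s I4 - wt s I3"
  show "finite {z::complex. z ^ ?d = 1}" by (rule finite_roots_unity) (use assms(3) in simp)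
  show "{t. t \<noteq> 0 \<and> (\<exists>c. torus_act s t x = (\<lambda>I. c * x I))} \<subseteq> {z. z ^ ?d = 1}"
  proof clarify
    fix t c assume t: "t \<noteq> 0" and e: "torus_act s t x = (\<lambda>I. c * x I)"
    have "t ^ wt s I3 * x I3 = c * x I3" using fun_cong[OF e, of I3] by (simp add: torus_wt)
    then have c: "c = t ^ wt s I3" using assms(1) by simp
    have "t ^ wt s I4 * x I4 = c * x I4" using fun_cong[OF e, of I4] by (simp add: torus_wt)
    then have "t ^ wt s I4 = t ^ wt s I3" using assms(2) c by simp
    moreover have "t ^ wt s I4 = t ^ wt s I3 * t ^ ?d"
      using assms(3) by (simp flip: power_add)
    ultimately show "t ^ ?d = 1" using t by simp
  qed
qed

lemma orbit_ss:
  assumes J: "J \<in> rsubsets n r" and x: "x \<in> semistable n r s (schubert n r J)"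
    and c: "c \<noteq> 0" and t: "t \<noteq> 0"
  shows "(\<lambda>I. c * torus_act s t x I) \<in> semistable n r s (schubert n r J)"
proof -
  obtain k f cf where k: "k \<ge> 1" and xX: "x \<in> schubert n r J" and fx: "f x \<noteq> 0"
    and inv: "\<forall>t y. t \<noteq> 0 \<and> y \<in> schubert n r J \<longrightarrow> f (torus_act s t y) = t ^ (k * r * s) * f y"
    and form: "is_form n r (n * k) f"
    using ss_data[OF x] by metis
  have yX: "(\<lambda>I. c * torus_act s t x I) \<in> schubert n r J"
    using X_scale[OF X_torus[OF J xX t] c] .
  have "f (\<lambda>I. c * torus_act s t x I) = c ^ (n * k) * (t ^ (k * r * s) * f x)"
    using form_scale[OF form] inv t xX by simp
  then have "f (\<lambda>I. c * torus_act s t x I) \<noteq> 0" using c t fx by simp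
  moreover have "invariant_on r s (schubert n r J) k f" using inv unfolding invariant_on_def by blast
  ultimately show ?thesis using yX k form unfolding semistable_def by blast
qed

lemma complex_root_ex:
  assumes "m > 0"
  shows "\<exists>t::complex. t ^ m = z"
proof -
  let ?t = "rcis (root m (cmod z)) (Arg z / real m)"
  have "?t ^ m = rcis (root m (cmod z) ^ m) (real m * (Arg z / real m))" by (rule DeMoivre2)
  also have "\<dots> = rcis (cmod z) (Arg z)" using assms by simp
  also have "\<dots> = z" by (rule rcis_cmod_Arg)
  finally show ?thesis by blast
qed

definition ms :: "nat set set \<Rightarrow> (nat set \<Rightarrow> nat) \<Rightarrow> nat set multiset" where
  "ms S m = (\<Sum>I\<in>S. replicate_mset (m I) I)"

lemma ms_set: "finite S \<Longrightarrow> set_mset (ms S m) \<subseteq> S"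
  unfolding ms_def by (induction S rule: finite_induct) auto

lemma ms_sum:
  fixes e :: "nat set \<Rightarrow> int"
  shows "finite S \<Longrightarrow> (\<Sum>I\<in>#ms S m. e I) = (\<Sum>I\<in>S. int (m I) * e I)"
  unfolding ms_def by (induction S rule: finite_induct) auto

lemma ms_prod:
  fixes \<rho> :: "nat set \<Rightarrow> complex"
  shows "finite S \<Longrightarrow> (\<Prod>I\<in>#ms S m. \<rho> I) = (\<Prod>I\<in>S. \<rho> I ^ m I)"
  unfolding ms_def by (induction S rule: finite_induct) auto

lemma powi_split:
  fixes z :: complex
  assumes "z \<noteq> 0"
  shows "z powi a = z ^ nat a / z ^ nat (- a)"
proof (cases "a \<ge> 0")
  case True then show ?thesis by (simp add: power_int_nonneg_exp)
next
  case False
  then have "a = - int (nat (- a))" by simp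
  then have "z powi a = inverse (z ^ nat (- a))"
    by (metis power_int_minus power_int_of_nat)
  then show ?thesis using False by (simp add: field_simps)
qed

lemma prod_powi:
  fixes f :: "'a \<Rightarrow> complex"
  shows "finite S \<Longrightarrow> (\<Prod>I\<in>S. f I) powi k = (\<Prod>I\<in>S. f I powi k)"
  by (induction S rule: finite_induct) (auto simp: power_int_mult_distrib)

lemma bezout_set:
  fixes e :: "'a \<Rightarrow> int"
  shows "finite S \<Longrightarrow> \<exists>\<beta>. (\<Sum>I\<in>S. \<beta> I * e I) = Gcd (e ` S)"
proof (induction S rule: finite_induct)
  case empty then show ?case by simp
next
  case (insert a F)
  then obtain \<beta> where \<beta>: "(\<Sum>I\<in>F. \<beta> I * e I) = Gcd (e ` F)" by blast
  obtain u v where uv: "u * e a + v * Gcd (e ` F) = gcd (e a) (Gcd (e ` F))"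
    using bezout_int by blast
  define \<beta>' where "\<beta>' I = (if I = a then u else v * \<beta> I)" for I
  have "(\<Sum>I\<in>insert a F. \<beta>' I * e I) = u * e a + (\<Sum>I\<in>F. v * \<beta> I * e I)"
    using insert by (simp add: \<beta>'_def) (intro sum.cong, auto)
  also have "(\<Sum>I\<in>F. v * \<beta> I * e I) = v * Gcd (e ` F)"
    using \<beta> by (simp add: sum_distrib_left[symmetric] mult.assoc)
  finally show ?case using uv by auto
qed

lemma prod_mset_nz2:
  fixes x :: "nat set \<Rightarrow> complex"
  shows "(\<forall>I\<in>#M. x I \<noteq> 0) \<Longrightarrow> (\<Prod>I\<in>#M. x I) \<noteq> 0"
  by (induction M) auto

lemma prod_mset_div:
  fixes \<nu> :: "nat set \<Rightarrow> complex"
  shows "(\<Prod>I\<in>#M. \<nu> I / c) = (\<Prod>I\<in>#M. \<nu> I) / c ^ size M"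
  by (induction M) auto

lemma prod_mset_mult:
  fixes \<nu> :: "nat set \<Rightarrow> complex"
  shows "(\<Prod>I\<in>#M. \<nu> I * x I) = (\<Prod>I\<in>#M. \<nu> I) * (\<Prod>I\<in>#M. x I)"
  by (induction M) auto

definition xm :: "(nat set \<Rightarrow> complex) \<Rightarrow> nat set multiset \<Rightarrow> complex" where
  "xm x M = (\<Prod>I\<in>#M. x I)"

definition binom :: "(nat set \<Rightarrow> complex) \<Rightarrow> nat set multiset \<Rightarrow> nat set multiset \<Rightarrow> (nat set \<Rightarrow> complex) \<Rightarrow> complex" where
  "binom x M1 M2 = (\<lambda>p. xm x M2 * (\<Prod>I\<in>#M1. p I) - xm x M1 * (\<Prod>I\<in>#M2. p I))"

definition goodpair :: "nat \<Rightarrow> (nat set \<Rightarrow> complex) \<Rightarrow> nat set multiset \<Rightarrow> nat set multiset \<Rightarrow> bool" where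
  "goodpair s x M1 M2 \<longleftrightarrow> set_mset M1 \<subseteq> {I. x I \<noteq> 0} \<and> set_mset M2 \<subseteq> {I. x I \<noteq> 0} \<and>
     size M1 = size M2 \<and> (\<Sum>I\<in>#M1. wt s I) = (\<Sum>I\<in>#M2. wt s I)"

definition Fset :: "nat \<Rightarrow> nat \<Rightarrow> nat \<Rightarrow> (nat set \<Rightarrow> complex) \<Rightarrow> ((nat set \<Rightarrow> complex) \<Rightarrow> complex) set" where
  "Fset n r s x = {(\<lambda>p. p I) | I. I \<in> rsubsets n r \<and> x I = 0} \<union> {binom x M1 M2 | M1 M2. goodpair s x M1 M2}"

definition Zset :: "nat \<Rightarrow> nat \<Rightarrow> nat \<Rightarrow> (nat set \<Rightarrow> complex) \<Rightarrow> (nat set \<Rightarrow> complex) set" where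
  "Zset n r s x = {p \<in> plvec n r. \<forall>f\<in>Fset n r s x. f p = 0}"

lemma lin_form:
  assumes "I \<in> rsubsets n r"
  shows "is_form n r 1 (\<lambda>p. p I)"
proof -
  define c where "c M = (if M = {#I#} then 1 else (0::complex))" for M
  have sup: "{M. c M \<noteq> 0} = {{#I#}}" by (auto simp: c_def)
  have "(\<lambda>p. p I) = eval_form c" by (rule ext) (simp add: eval_form_def sup c_def)
  moreover have "\<forall>M. c M \<noteq> 0 \<longrightarrow> size M = 1 \<and> set_mset M \<subseteq> rsubsets n r"
    using assms by (auto simp: c_def)
  moreover have "finite {M. c M \<noteq> 0}" using sup by simp
  ultimately show ?thesis unfolding is_form_def by blast
qed

lemma plvec_supp: "x \<in> plvec n r \<Longrightarrow> {I. x I \<noteq> 0} \<subseteq> rsubsets n r"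
  unfolding plvec_def by auto

lemma binom_form:
  assumes x: "x \<in> plvec n r" and g: "goodpair s x M1 M2"
  shows "is_form n r (size M1) (binom x M1 M2)"
proof -
  define c where "c M = (if M = M1 then xm x M2 else 0) - (if M = M2 then xm x M1 else 0)" for M
  have sup: "{M. c M \<noteq> 0} \<subseteq> {M1, M2}" by (auto simp: c_def)
  have fin: "finite {M. c M \<noteq> 0}" using sup finite_subset by blast
  have props: "\<forall>M. c M \<noteq> 0 \<longrightarrow> size M = size M1 \<and> set_mset M \<subseteq> rsubsets n r"
  proof (intro allI impI)
    fix M assume "c M \<noteq> 0"
    then have "M = M1 \<or> M = M2" using sup by blast
    then show "size M = size M1 \<and> set_mset M \<subseteq> rsubsets n r"
      using g plvec_supp[OF x] unfolding goodpair_def by (elim disjE) auto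
  qed
  have "binom x M1 M2 = eval_form c"
  proof
    fix p
    have "eval_form c p = (\<Sum>M\<in>{M1, M2}. c M * (\<Prod>I\<in>#M. p I))"
      by (rule eval_form_superset) (use sup in auto)
    also have "\<dots> = binom x M1 M2 p"
    proof (cases "M1 = M2")
      case True then show ?thesis by (simp add: c_def binom_def)
    next
      case False
      then have "(\<Sum>M\<in>{M1, M2}. c M * (\<Prod>I\<in>#M. p I))
          = c M1 * (\<Prod>I\<in>#M1. p I) + c M2 * (\<Prod>I\<in>#M2. p I)" by simp
      also have "\<dots> = binom x M1 M2 p" using False by (simp add: c_def binom_def)
      finally show ?thesis .
    qed
    finally show "binom x M1 M2 p = eval_form c p" by simp
  qed
  then show ?thesis unfolding is_form_def using fin props by blast
qed

lemma Z_closed: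
  assumes x: "x \<in> plvec n r"
  shows "zclosed n r (Zset n r s x)"
proof -
  have "\<forall>f\<in>Fset n r s x. \<exists>d. is_form n r d f"
    unfolding Fset_def using lin_form binom_form[OF x] by blast
  then show ?thesis unfolding zclosed_def Zset_def by blast
qed

lemma orbit_Z:
  assumes x: "x \<in> plvec n r" and c: "c \<noteq> 0" and t: "t \<noteq> 0"
  shows "(\<lambda>I. c * torus_act s t x I) \<in> Zset n r s x"
proof -
  let ?y = "\<lambda>I. c * torus_act s t x I"
  have "?y \<in> plvec n r" using plvec_scale[OF _ c] plvec_torus[OF t] x by blast
  moreover have "f ?y = 0" if f: "f \<in> Fset n r s x" for f
  proof -
    consider (lin) I where "f = (\<lambda>p. p I)" "x I = 0"
      | (bin) M1 M2 where "f = binom x M1 M2" "goodpair s x M1 M2"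
      using f unfolding Fset_def by blast
    then show ?thesis
    proof cases
      case lin then show ?thesis by (simp add: torus_wt)
    next
      case bin
      have "(\<Prod>I\<in>#M. ?y I) = c ^ size M * t ^ (\<Sum>I\<in>#M. wt s I) * xm x M" for M
        unfolding torus_wt xm_def using prod_mset_scale[where c=c and t=t and x=x and M=M and s=s]
        by (simp add: mult.assoc)
      then show ?thesis using bin(2) unfolding bin(1) binom_def goodpair_def by simp
    qed
  qed
  ultimately show ?thesis unfolding Zset_def by blast
qed

lemma Z_orbit:
  assumes x: "x \<in> plvec n r" and y: "y \<in> Zset n r s x"
    and y3: "y I3 \<noteq> 0" and y4: "y I4 \<noteq> 0" and w34: "wt s I3 < wt s I4"
  shows "\<exists>c t. c \<noteq> 0 \<and> t \<noteq> 0 \<and> y = (\<lambda>I. c * torus_act s t x I)"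
proof -
  define S where "S = {I. x I \<noteq> 0}"
  have Sfin: "finite S" using plvec_supp[OF x] finite_rsubsets finite_subset unfolding S_def by blast
  have yp: "y \<in> plvec n r" and yF: "\<forall>f\<in>Fset n r s x. f y = 0" using y unfolding Zset_def by auto
  have ysupp: "y I = 0" if "x I = 0" for I
  proof (cases "I \<in> rsubsets n r")
    case True then have "(\<lambda>p. p I) \<in> Fset n r s x" using that unfolding Fset_def by blast
    then show ?thesis using yF by fastforce
  next
    case False then show ?thesis using yp unfolding plvec_def by auto
  qed
  have I3S: "I3 \<in> S" and I4S: "I4 \<in> S" using ysupp y3 y4 unfolding S_def by auto
  define \<nu> where "\<nu> I = y I / x I" for I
  have y\<nu>: "y I = \<nu> I * x I" for I using ysupp[of I] by (cases "x I = 0") (auto simp: \<nu>_def)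
  have R: "(\<Prod>I\<in>#M1. \<nu> I) = (\<Prod>I\<in>#M2. \<nu> I)" if g: "goodpair s x M1 M2" for M1 M2
  proof -
    have "binom x M1 M2 \<in> Fset n r s x" using g unfolding Fset_def by blast
    then have "binom x M1 M2 y = 0" using yF by blast
    then have e: "xm x M2 * (\<Prod>I\<in>#M1. y I) = xm x M1 * (\<Prod>I\<in>#M2. y I)" unfolding binom_def by simp
    have p: "(\<Prod>I\<in>#M. y I) = (\<Prod>I\<in>#M. \<nu> I) * xm x M" for M
      unfolding y\<nu> xm_def by (rule prod_mset_mult)
    have nz1: "xm x M1 \<noteq> 0" and nz2: "xm x M2 \<noteq> 0"
      using g unfolding goodpair_def xm_def by (auto intro!: prod_mset_nz2)
    from e have "((\<Prod>I\<in>#M1. \<nu> I) - (\<Prod>I\<in>#M2. \<nu> I)) * (xm x M1 * xm x M2) = 0"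
      unfolding p by (simp add: algebra_simps)
    then show ?thesis using nz1 nz2 by simp
  qed
  define w3 where "w3 = wt s I3"
  define e where "e I = int (wt s I) - int w3" for I
  define \<nu>0 where "\<nu>0 = \<nu> I3"
  have \<nu>0: "\<nu>0 \<noteq> 0" using y3 I3S by (simp add: \<nu>0_def \<nu>_def S_def)
  define \<rho> where "\<rho> I = \<nu> I / \<nu>0" for I
  have R\<rho>: "(\<Prod>I\<in>#M1. \<rho> I) = (\<Prod>I\<in>#M2. \<rho> I)"
    if M12: "set_mset M1 \<subseteq> S" "set_mset M2 \<subseteq> S" "(\<Sum>I\<in>#M1. e I) = (\<Sum>I\<in>#M2. e I)" for M1 M2
  proof -
    let ?M1 = "M1 + replicate_mset (size M2) I3" and ?M2 = "M2 + replicate_mset (size M1) I3"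
    have sumw: "(\<Sum>I\<in>#M. e I) = int (\<Sum>I\<in>#M. wt s I) - int (size M) * int w3" for M
      by (induction M) (auto simp: e_def algebra_simps)
    have "int (\<Sum>I\<in>#M1. wt s I) + int (size M2) * int w3 = int (\<Sum>I\<in>#M2. wt s I) + int (size M1) * int w3"
      using M12(3) sumw[of M1] sumw[of M2] by linarith
    then have "(\<Sum>I\<in>#M1. wt s I) + size M2 * w3 = (\<Sum>I\<in>#M2. wt s I) + size M1 * w3"
      by (metis of_nat_add of_nat_mult of_nat_eq_iff)
    then have "goodpair s x ?M1 ?M2"
      unfolding goodpair_def using M12 I3S by (auto simp: S_def w3_def)
    then have "(\<Prod>I\<in>#?M1. \<nu> I) = (\<Prod>I\<in>#?M2. \<nu> I)" by (rule R)
    then have eq: "(\<Prod>I\<in>#M1. \<nu> I) * \<nu>0 ^ size M2 = (\<Prod>I\<in>#M2. \<nu> I) * \<nu>0 ^ size M1"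
      by (simp add: \<nu>0_def)
    have n1: "\<nu>0 ^ size M1 \<noteq> 0" and n2: "\<nu>0 ^ size M2 \<noteq> 0" using \<nu>0 by auto
    show ?thesis unfolding \<rho>_def prod_mset_div using eq n1 n2
      by (simp add: divide_eq_eq eq_divide_eq mult.commute mult.left_commute)
  qed
  have d4pos: "wt s I4 - w3 > 0" using w34 by (simp add: w3_def)
  have e4: "e I4 = int (wt s I4 - w3)" using w34 by (simp add: e_def w3_def)
  have \<rho>4: "\<rho> I4 \<noteq> 0" using y4 I4S \<nu>0 by (simp add: \<rho>_def \<nu>_def S_def)
  have \<rho>nz: "\<rho> I \<noteq> 0" if I: "I \<in> S" for I
  proof
    assume z: "\<rho> I = 0"
    let ?d = "wt s I4 - w3"
    let ?M1 = "replicate_mset ?d I + replicate_mset (nat (- e I)) I4"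
    let ?M2 = "replicate_mset (nat (e I)) I4"
    have "(\<Sum>J\<in>#?M1. e J) = (\<Sum>J\<in>#?M2. e J)" unfolding e4[symmetric] using e4
      by (cases "e I \<ge> 0") (auto simp: algebra_simps)
    then have "(\<Prod>J\<in>#?M1. \<rho> J) = (\<Prod>J\<in>#?M2. \<rho> J)" by (intro R\<rho>) (use I I4S in auto)
    moreover have "(\<Prod>J\<in>#?M1. \<rho> J) = 0" using z d4pos by simp
    moreover have "(\<Prod>J\<in>#?M2. \<rho> J) \<noteq> 0" using \<rho>4 by simp
    ultimately show False by simp
  qed
  have RZ: "(\<Prod>I\<in>S. \<rho> I powi a I) = (\<Prod>I\<in>S. \<rho> I powi b I)"
    if ab: "(\<Sum>I\<in>S. a I * e I) = (\<Sum>I\<in>S. b I * e I)" for a b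
  proof -
    define M1 where "M1 = ms S (\<lambda>I. nat (a I)) + ms S (\<lambda>I. nat (- b I))"
    define M2 where "M2 = ms S (\<lambda>I. nat (b I)) + ms S (\<lambda>I. nat (- a I))"
    have hs: "(\<Sum>I\<in>S. int (nat (f I)) * e I) = (\<Sum>I\<in>S. f I * e I) + (\<Sum>I\<in>S. int (nat (- f I)) * e I)"
      for f :: "nat set \<Rightarrow> int"
      unfolding sum.distrib[symmetric] by (rule sum.cong) (auto simp: algebra_simps)
    have "(\<Sum>I\<in>#M1. e I) = (\<Sum>I\<in>#M2. e I)"
      unfolding M1_def M2_def using Sfin hs[of a] hs[of b] ab by (simp add: ms_sum)
    then have "(\<Prod>I\<in>#M1. \<rho> I) = (\<Prod>I\<in>#M2. \<rho> I)"
      by (intro R\<rho>) (use ms_set[OF Sfin] in \<open>auto simp: M1_def M2_def\<close>)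
    then have eq: "(\<Prod>I\<in>S. \<rho> I ^ nat (a I)) * (\<Prod>I\<in>S. \<rho> I ^ nat (- b I))
        = (\<Prod>I\<in>S. \<rho> I ^ nat (b I)) * (\<Prod>I\<in>S. \<rho> I ^ nat (- a I))"
      unfolding M1_def M2_def using Sfin by (simp add: ms_prod)
    have nza: "(\<Prod>I\<in>S. \<rho> I ^ nat (- a I)) \<noteq> 0" and nzb: "(\<Prod>I\<in>S. \<rho> I ^ nat (- b I)) \<noteq> 0"
      using \<rho>nz Sfin by auto
    have pa: "(\<Prod>I\<in>S. \<rho> I powi f I) = (\<Prod>I\<in>S. \<rho> I ^ nat (f I)) / (\<Prod>I\<in>S. \<rho> I ^ nat (- f I))"
      for f :: "nat set \<Rightarrow> int"
      unfolding prod_dividef[symmetric] by (rule prod.cong) (use \<rho>nz powi_split in auto)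
    show ?thesis unfolding pa using eq nza nzb
      by (simp add: divide_eq_eq eq_divide_eq mult.commute mult.left_commute)
  qed
  define g where "g = Gcd (e ` S)"
  obtain \<beta> where \<beta>: "(\<Sum>I\<in>S. \<beta> I * e I) = g" using bezout_set[OF Sfin] unfolding g_def by blast
  have g0: "g \<noteq> 0" unfolding g_def using I4S e4 d4pos by (auto simp: Gcd_0_iff)
  have "g \<ge> 0" unfolding g_def by simp
  then have gpos: "g > 0" using g0 by linarith
  have gdvd: "g dvd e J" if "J \<in> S" for J unfolding g_def using that by (simp add: Gcd_dvd)
  define t0 where "t0 = (\<Prod>I\<in>S. \<rho> I powi \<beta> I)"
  have t0nz: "t0 \<noteq> 0" using \<rho>nz Sfin by (simp add: t0_def)
  obtain t where t: "t ^ nat g = t0" using complex_root_ex[of "nat g" t0] gpos by auto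
  have tnz: "t \<noteq> 0" using t t0nz gpos by (metis power_0_left zero_less_nat_eq not_less0 gr0_implies_Suc)
  have \<rho>J: "\<rho> J = t powi e J" if J: "J \<in> S" for J
  proof -
    obtain k where k: "e J = g * k" using gdvd[OF J] by (auto elim: dvdE)
    have s1: "(\<Sum>I\<in>S. (\<beta> I * k) * e I) = e J"
    proof -
      have "(\<Sum>I\<in>S. (\<beta> I * k) * e I) = (\<Sum>I\<in>S. \<beta> I * e I) * k"
        unfolding sum_distrib_right by (rule sum.cong) (auto simp: mult.commute mult.left_commute)
      then show ?thesis using \<beta> k by simp
    qed
    have s2: "(\<Sum>I\<in>S. (if I = J then 1 else 0) * e I) = e J"
    proof -
      have "(\<Sum>I\<in>S. (if I = J then 1 else 0) * e I) = (\<Sum>I\<in>S. if I = J then e I else 0)"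
        by (rule sum.cong) auto
      then show ?thesis using J Sfin by simp
    qed
    have "(\<Prod>I\<in>S. \<rho> I powi (\<beta> I * k)) = (\<Prod>I\<in>S. \<rho> I powi (if I = J then 1 else 0))"
      by (rule RZ) (use s1 s2 in simp)
    also have "\<dots> = (\<Prod>I\<in>S. (if I = J then \<rho> I else 1))" by (rule prod.cong) auto
    also have "\<dots> = \<rho> J" using J Sfin by simp
    finally have "\<rho> J = (\<Prod>I\<in>S. (\<rho> I powi \<beta> I) powi k)" by (simp add: power_int_mult)
    also have "\<dots> = t0 powi k" unfolding t0_def using prod_powi[OF Sfin] by simp
    also have "\<dots> = t powi e J" unfolding k t[symmetric] power_int_power using gpos by simp
    finally show ?thesis .
  qed
  define c where "c = \<nu>0 * t powi (- int w3)"
  have cnz: "c \<noteq> 0" using \<nu>0 tnz by (simp add: c_def)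
  have "y = (\<lambda>I. c * torus_act s t x I)"
  proof
    fix I show "y I = c * torus_act s t x I"
    proof (cases "I \<in> S")
      case True
      have "\<nu> I = \<nu>0 * \<rho> I" using \<nu>0 by (simp add: \<rho>_def)
      also have "\<rho> I = t powi e I" by (rule \<rho>J[OF True])
      also have "t powi e I = t powi (- int w3) * t ^ wt s I"
        using tnz power_int_add[of t "- int w3" "int (wt s I)"] by (simp add: e_def)
      finally show ?thesis using y\<nu>[of I] by (simp add: torus_wt c_def algebra_simps)
    next
      case False then show ?thesis using ysupp by (simp add: S_def torus_wt)
    qed
  qed
  then show ?thesis using cnz tnz by blast
qed

lemma sl_nth_le:
  assumes A: "finite A" and k: "k < card A"
  shows "sl A ! k \<le> s \<longleftrightarrow> k < card {x\<in>A. x \<le> s}"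
proof -
  let ?L = "sl A"
  have L: "set ?L = A" "length ?L = card A" "sorted_wrt (<) ?L" "distinct ?L"
    using A by (auto simp: sorted_list_of_set.length_sorted_key_list_of_set)
  have key: "{x\<in>A. x \<le> ?L ! k} = (!) ?L ` {..k}"
  proof
    show "{x\<in>A. x \<le> ?L ! k} \<subseteq> (!) ?L ` {..k}"
    proof clarify
      fix x assume x: "x \<in> A" "x \<le> ?L ! k"
      then obtain i where i: "i < length ?L" "x = ?L ! i" using L(1) by (metis in_set_conv_nth)
      have "i \<le> k"
      proof (rule ccontr)
        assume "\<not> i \<le> k"
        then have "?L ! k < ?L ! i" using sorted_wrt_nth_less[OF L(3), of k i] i(1) by simp
        then show False using x i by simp
      qed
      then show "x \<in> (!) ?L ` {..k}" using i by blast
    qed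
    show "(!) ?L ` {..k} \<subseteq> {x\<in>A. x \<le> ?L ! k}"
    proof clarify
      fix i assume i: "i \<le> k"
      then have "i < length ?L" using k L(2) by simp
      then have "?L ! i \<in> A" using L(1) nth_mem by blast
      moreover have "?L ! i \<le> ?L ! k"
        using i sorted_wrt_nth_less[OF L(3), of i k] k L(2) by (cases "i = k") auto
      ultimately show "?L ! i \<in> A \<and> ?L ! i \<le> ?L ! k" by simp
    qed
  qed
  have ck: "card {x\<in>A. x \<le> ?L ! k} = Suc k"
  proof -
    have "inj_on ((!) ?L) {..k}" by (rule inj_on_nth) (use L k in auto)
    then show ?thesis unfolding key by (simp add: card_image)
  qed
  show ?thesis
  proof
    assume "?L ! k \<le> s"
    then have "{x\<in>A. x \<le> ?L ! k} \<subseteq> {x\<in>A. x \<le> s}" by auto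
    then have "card {x\<in>A. x \<le> ?L ! k} \<le> card {x\<in>A. x \<le> s}" by (rule card_mono[rotated]) (use A in simp)
    then show "k < card {x\<in>A. x \<le> s}" using ck by simp
  next
    assume c: "k < card {x\<in>A. x \<le> s}"
    show "?L ! k \<le> s"
    proof (rule ccontr)
      assume "\<not> ?L ! k \<le> s"
      then have "{x\<in>A. x \<le> s} \<subseteq> {x\<in>A. x \<le> ?L ! k} - {?L ! k}" by auto
      then have "card {x\<in>A. x \<le> s} \<le> card ({x\<in>A. x \<le> ?L ! k} - {?L ! k})"
        by (rule card_mono[rotated]) (use A in simp)
      also have "\<dots> = k"
      proof -
        have "?L ! k \<in> A" using L(1,2) k nth_mem by metis
        then show ?thesis using ck A by (simp add: card_Diff_singleton_if)
      qed
      finally show False using c by simp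
    qed
  qed
qed

lemma minor_id_off:
  assumes J: "J \<in> rsubsets n r" and I: "I \<in> rsubsets n r" and IJ: "I \<noteq> J"
  shows "minor (\<lambda>i k. if i = sl J ! k then 1 else 0) r I = 0"
  unfolding minor_def
proof (rule sum.neutral, clarify)
  fix \<sigma> assume \<sigma>: "\<sigma> permutes {0..<r}"
  have "(\<Prod>k<r. (if sl I ! \<sigma> k = sl J ! k then 1 else 0) :: complex) = 0"
  proof (rule ccontr)
    assume "\<not> ?thesis"
    note nz = this
    have all: "\<forall>k<r. sl I ! \<sigma> k = sl J ! k"
    proof (intro allI impI, rule ccontr)
      fix k assume "k < r" "sl I ! \<sigma> k \<noteq> sl J ! k"
      then have "(\<Prod>k<r. (if sl I ! \<sigma> k = sl J ! k then 1 else 0) :: complex) = 0"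
        by (intro prod_zero) auto
      with nz show False by simp
    qed
    have "J \<subseteq> I"
    proof
      fix j assume "j \<in> J"
      then have "j \<in> set (sl J)" using rsub_props(1)[OF J] by simp
      then obtain k where k0: "k < length (sl J)" "sl J ! k = j" by (auto simp: in_set_conv_nth)
      then have k: "k < r" "j = sl J ! k" using rsub_props(2)[OF J] by auto
      have "\<sigma> k < r" using permutes_in_image[OF \<sigma>] k(1) by auto
      then have "sl I ! \<sigma> k \<in> set (sl I)" using rsub_props(2)[OF I] by simp
      then have "sl I ! \<sigma> k \<in> I" using rsub_props(1)[OF I] by simp
      then show "j \<in> I" using all k by simp
    qed
    then have "J = I" using card_subset_eq[OF rsub_fin[OF I] \<open>J \<subseteq> I\<close>] rsub_props(6)[OF I] rsub_props(6)[OF J]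
      by simp
    then show False using IJ by simp
  qed
  then show "of_int (sign \<sigma>) * (\<Prod>k<r. if sl I ! \<sigma> k = sl J ! k then 1 else 0) = (0::complex)"
    by simp
qed

lemma dir1:
  assumes n: "n \<ge> 1" and J: "J \<in> rsubsets n r" and nd: "\<not> n dvd r * s"
  shows "semistable n r s (schubert n r J) = stable n r s (schubert n r J)"
proof
  show "stable n r s (schubert n r J) \<subseteq> semistable n r s (schubert n r J)"
    unfolding stable_def by blast
  show "semistable n r s (schubert n r J) \<subseteq> stable n r s (schubert n r J)"
  proof
    fix x assume x: "x \<in> semistable n r s (schubert n r J)"
    have xX: "x \<in> schubert n r J" using x unfolding semistable_def by blast
    have xp: "x \<in> plvec n r" using X_plvec[OF J] xX by blast
    obtain I3 where I3: "I3 \<in> rsubsets n r" "x I3 \<noteq> 0" "n * wt s I3 < r * s"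
      using ss_sides(1)[OF x nd n] by blast
    obtain I4 where I4: "I4 \<in> rsubsets n r" "x I4 \<noteq> 0" "n * wt s I4 > r * s"
      using ss_sides(2)[OF x nd n] by blast
    have w34: "wt s I3 < wt s I4" using I3(3) I4(3) by (meson less_trans nat_mult_less_cancel_disj)
    let ?Z = "Zset n r s x"
    have "torus_orbit s x = ?Z \<inter> semistable n r s (schubert n r J)"
    proof
      show "torus_orbit s x \<subseteq> ?Z \<inter> semistable n r s (schubert n r J)"
        unfolding torus_orbit_def using orbit_Z[OF xp] orbit_ss[OF J x] by blast
      show "?Z \<inter> semistable n r s (schubert n r J) \<subseteq> torus_orbit s x"
      proof
        fix y assume y: "y \<in> ?Z \<inter> semistable n r s (schubert n r J)"
        obtain J3 where J3: "J3 \<in> rsubsets n r" "y J3 \<noteq> 0" "n * wt s J3 < r * s"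
          using ss_sides(1)[OF _ nd n] y by blast
        obtain J4 where J4: "J4 \<in> rsubsets n r" "y J4 \<noteq> 0" "n * wt s J4 > r * s"
          using ss_sides(2)[OF _ nd n] y by blast
        have "wt s J3 < wt s J4" using J3(3) J4(3) by (meson less_trans nat_mult_less_cancel_disj)
        then obtain c t where "c \<noteq> 0" "t \<noteq> 0" "y = (\<lambda>I. c * torus_act s t x I)"
          using Z_orbit[OF xp _ J3(2) J4(2)] y by blast
        then show "y \<in> torus_orbit s x" unfolding torus_orbit_def by blast
      qed
    qed
    moreover have "zclosed n r ?Z" by (rule Z_closed[OF xp])
    moreover have "finite {t. t \<noteq> 0 \<and> (\<exists>c. torus_act s t x = (\<lambda>I. c * x I))}"
      by (rule stab_finite[OF I3(2) I4(2) w34])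
    ultimately show "x \<in> stable n r s (schubert n r J)" unfolding stable_def using x by blast
  qed
qed

lemma weight_eq:
  fixes n r s :: nat and J :: "nat set"
  assumes "2 \<le> n" and "1 \<le> r" and "r \<le> n - 1" and "1 \<le> s" and "s \<le> n - 1"
    and J: "J \<in> rsubsets n r" and p: "pairing n r s J \<le> 0"
    and min: "\<forall>J'\<in>rsubsets n r. pairing n r s J' \<le> 0 \<longrightarrow> bruhat_le r J J'"
    and dv: "n dvd r * s"
  shows "n * wt s J = r * s"
proof -
  define a where "a = wt s J"
  obtain m where m: "r * s = n * m" using dv by (auto elim: dvdE)
  have npos: "real n > 0" using assms(1) by simp
  have "real a \<le> real r * real s / real n" using p unfolding pairing_def a_def wt_def by simp
  then have "real a * real n \<le> real r * real s" using npos by (simp add: pos_le_divide_eq)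
  then have "a * n \<le> r * s" by (metis of_nat_le_iff of_nat_mult)
  then have am: "a \<le> m" using m assms(1) by (simp add: mult.commute)
  have ms: "m < s"
  proof -
    have "r < n" using assms by linarith
    then have "r * s < n * s" using assms(4) by simp
    then have "n * m < n * s" using m by simp
    then show ?thesis by simp
  qed
  have mr: "m < r"
  proof -
    have "s < n" using assms by linarith
    then have "r * s < r * n" using assms(2) by simp
    then have "n * m < n * r" using m by (simp add: mult.commute)
    then show ?thesis by simp
  qed
  show ?thesis
  proof (rule ccontr)
    assume "n * wt s J \<noteq> r * s"
    then have "a \<noteq> m" using m by (simp add: a_def)
    then have am': "a < m" using am by simp
    have Jsub: "J \<subseteq> {1..n}" and cJ: "card J = r" and fJ: "finite J" using rsub_props[OF J] rsub_fin[OF J] by auto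
    have "card (J - {1..s}) = r - a"
      using cJ fJ by (simp add: card_Diff_subset_Int a_def wt_def)
    moreover have "J - {1..s} \<subseteq> {s+1..n}" using Jsub by auto
    ultimately have ra: "r - a \<le> n - s" by (metis card_atLeastAtMost card_mono finite_atLeastAtMost diff_Suc_Suc Suc_eq_plus1)
    define J2 where "J2 = {1..a+1} \<union> {s+1..s+(r-a-1)}"
    have disj: "{1..a+1} \<inter> {s+1..s+(r-a-1)} = {}" using am' ms by auto
    have cJ2: "card J2 = r" unfolding J2_def using card_Un_disjoint[OF _ _ disj] am' mr by simp
    have J2sub: "J2 \<subseteq> {1..n}" unfolding J2_def using am' ms ra assms by auto
    have J2r: "J2 \<in> rsubsets n r" unfolding rsubsets_def using cJ2 J2sub by simp
    have J2s: "J2 \<inter> {1..s} = {1..a+1}" unfolding J2_def using am' ms by auto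
    have "real (a + 1) * real n \<le> real r * real s"
    proof -
      have "a + 1 \<le> m" using am' by simp
      then have "(a + 1) * n \<le> m * n" by (rule mult_le_mono1)
      then have "(a + 1) * n \<le> r * s" using m by (simp add: mult.commute)
      then show ?thesis by (metis of_nat_le_iff of_nat_mult)
    qed
    then have "pairing n r s J2 \<le> 0" unfolding pairing_def J2s using npos by (simp add: pos_le_divide_eq)
    then have "bruhat_le r J J2" using min J2r by blast
    then have le: "sl J ! a \<le> sl J2 ! a" unfolding bruhat_le_def using am' mr by simp
    have fJ2: "finite J2" unfolding J2_def by simp
    have "{x\<in>J2. x \<le> s} = J2 \<inter> {1..s}" using J2sub by auto
    then have c2: "{x\<in>J2. x \<le> s} = {1..a+1}" using J2s by simp
    have "sl J2 ! a \<le> s" using sl_nth_le[OF fJ2, of a s] cJ2 am' mr c2 by simp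
    moreover have c1: "{x\<in>J. x \<le> s} = J \<inter> {1..s}" using Jsub by auto
    have "\<not> sl J ! a \<le> s" using sl_nth_le[OF fJ, of a s] cJ am' mr c1 by (simp add: a_def wt_def)
    ultimately show False using le by simp
  qed
qed

lemma dir2:
  fixes n r s :: nat and J :: "nat set"
  assumes "2 \<le> n" and "1 \<le> r" and "r \<le> n - 1" and "1 \<le> s" and "s \<le> n - 1"
    and J: "J \<in> rsubsets n r" and "pairing n r s J \<le> 0"
    and "\<forall>J'\<in>rsubsets n r. pairing n r s J' \<le> 0 \<longrightarrow> bruhat_le r J J'"
    and dv: "n dvd r * s"
  shows "semistable n r s (schubert n r J) \<noteq> stable n r s (schubert n r J)"
proof -
  have na: "n * wt s J = r * s" using weight_eq[OF assms] .
  define idb where "idb i j = (if i = j then (1::complex) else 0)" for i j :: nat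
  have idb: "idb \<in> borel n" unfolding borel_def idb_def by auto
  define eJ where "eJ = plucker n r (\<lambda>i k. idb i (sl J ! k))"
  have eX: "eJ \<in> schubert n r J"
    using cell_sub_X idb unfolding schubert_cell_def eJ_def by blast
  have eval: "eJ = (\<lambda>I. if I = J then 1 else 0)"
  proof
    fix I show "eJ I = (if I = J then 1 else 0)"
    proof (cases "I = J")
      case True
      have "minor (\<lambda>i k. idb i (sl J ! k)) r J = (\<Prod>k<r. idb (sl J ! k) (sl J ! k))"
        by (rule minor_triangular[OF _ J]) (simp add: idb_def)
      then show ?thesis using True J by (simp add: eJ_def plucker_def idb_def)
    next
      case False
      show ?thesis
      proof (cases "I \<in> rsubsets n r")
        case True
        have "minor (\<lambda>i k. if i = sl J ! k then 1 else 0) r I = 0"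
          by (rule minor_id_off[OF J True False])
        then show ?thesis using True False by (simp add: eJ_def plucker_def idb_def)
      qed (use False in \<open>simp add: eJ_def plucker_def\<close>)
    qed
  qed
  define f where "f p = p J ^ n" for p :: "nat set \<Rightarrow> complex"
  have form: "is_form n r (n * 1) f"
  proof -
    define c where "c M = (if M = replicate_mset n J then (1::complex) else 0)" for M
    have sup: "{M. c M \<noteq> 0} = {replicate_mset n J}" by (auto simp: c_def)
    have "f = eval_form c" by (rule ext) (simp add: eval_form_def sup c_def f_def)
    moreover have "\<forall>M. c M \<noteq> 0 \<longrightarrow> size M = n * 1 \<and> set_mset M \<subseteq> rsubsets n r"
      using J assms(1) by (auto simp: c_def)
    moreover have "finite {M. c M \<noteq> 0}" using sup by simp
    ultimately show ?thesis unfolding is_form_def by blast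
  qed
  have inv: "invariant_on r s (schubert n r J) 1 f"
    unfolding invariant_on_def
  proof (intro allI impI)
    fix t :: complex and y assume "t \<noteq> 0 \<and> y \<in> schubert n r J"
    have "f (torus_act s t y) = (t ^ wt s J) ^ n * y J ^ n" by (simp add: f_def torus_wt power_mult_distrib)
    also have "(t ^ wt s J) ^ n = t ^ (1 * r * s)" using na by (simp flip: power_mult add: mult.commute)
    finally show "f (torus_act s t y) = t ^ (1 * r * s) * f y" by (simp add: f_def)
  qed
  have ess: "eJ \<in> semistable n r s (schubert n r J)"
    unfolding semistable_def using eX form inv by (auto simp: eval f_def intro!: exI[of _ 1] exI[of _ f])
  have stab: "{t. t \<noteq> 0 \<and> (\<exists>c. torus_act s t eJ = (\<lambda>I. c * eJ I))} = - {0}"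
  proof -
    have "torus_act s t eJ = (\<lambda>I. t ^ wt s J * eJ I)" for t
      by (rule ext) (simp add: torus_wt eval)
    then show ?thesis by blast
  qed
  have "infinite (- {0::complex})"
    using Diff_infinite_finite[of "{0::complex}" UNIV] infinite_UNIV_char_0 by (simp add: Compl_eq_Diff_UNIV)
  then have "\<not> finite {t. t \<noteq> 0 \<and> (\<exists>c. torus_act s t eJ = (\<lambda>I. c * eJ I))}"
    unfolding stab by simp
  then have "eJ \<notin> stable n r s (schubert n r J)" unfolding stable_def by blast
  then show ?thesis using ess by blast
qed

theorem corollary5p9:
  fixes n r s :: nat and J :: "nat set"
  assumes "2 \<le> n" and "1 \<le> r" and "r \<le> n - 1" and "1 \<le> s" and "s \<le> n - 1"
    and "J \<in> rsubsets n r" and "pairing n r s J \<le> 0"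
    and "\<forall>J'\<in>rsubsets n r. pairing n r s J' \<le> 0 \<longrightarrow> bruhat_le r J J'"
  shows "semistable n r s (schubert n r J) = stable n r s (schubert n r J) \<longleftrightarrow> \<not> n dvd r * s"
proof (cases "n dvd r * s")
  case True
  then show ?thesis using dir2[OF assms True] by simp
next
  case False
  have "n \<ge> 1" using assms(1) by simp
  then show ?thesis using dir1[OF _ assms(6) False] False by simp
qed

end
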